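(* Let $p(L,M,D;\mu\to1)$ be a generative reasoning model, let $\alpha\in L$, and let $\Delta\subseteq L$ be finite. Then $p(\alpha\mid\Delta)=1$ if and only if $S\mathrel{|\!\!\equiv}\alpha$ for every cardinality-maximal possible subset $S$ of $\Delta$.
   Context: Fix a multiset of data $\{d_1,\dots,d_K\}$ with $K\ge1$, and a propositional language $L$ over finitely many atoms, with set of models (truth assignments) $\mathcal M$. A function $m:\{d_1,\dots,d_K\}\to\mathcal M$ assigns to each datum the model it supports. The probability of a model $n$ is $p(n)=|\{k:m(d_k)=n\}|/K$. For $\mu\in(0,1)$ and $\alpha\in L$, set $p(\alpha\mid m)=\mu$ if $m$ satisfies $\alpha$ and $1-\mu$ otherwise. For finite $\Delta$, set $p(\Delta\mid m)=\prod_{\beta\in\Delta}p(\beta\mid m)$, which is $1$ for empty $\Delta$. In $p(L,M,D;\mu\to1)$, $$p(\alpha\mid\Delta)=\lim_{\mu\to1^-}\frac{\sum_{m}p(\alpha\mid m)p(\Delta\mid m)p(m)}{\sum_m p(\Delta\mid m)p(m)}.$$ Notation and definitions: - For $S\subseteq L$, $[\![S]\!]$ is the set of models satisfying every formula of $S$, $[\![\alpha]\!]=[\![\{\alpha\}]\!]$, and $[\![S]\!]_p=\{m\in[\![S]\!]:p(m)\neq0\}$. - $S\mathrel{|\!\!\equiv}\alpha$ (empirical consequence) means $[\![S]\!]_p\subseteq[\![\alpha]\!]_p$. - $S\subseteq\Delta$ is a maximal possible subset of $\Delta$ if $[\![S]\!]_p\neq\emptyset$ and $[\![S\cup\{\beta\}]\!]_p=\emptyset$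 for all $\beta\in\Delta\setminus S$. - A cardinality-maximal possible subset is a maximal possible subset of maximum cardinality among all maximal possible subsets of $\Delta$. *)

theory Defs
  imports Complex_Main
begin

datatype 'a form =
    Atom 'a
  | Top
  | Bot
  | Neg "'a form"
  | Conj "'a form" "'a form"
  | Disj "'a form" "'a form"
  | Impl "'a form" "'a form"

type_synonym 'a model = "'a \<Rightarrow> bool"

fun sat :: "'a model \<Rightarrow> 'a form \<Rightarrow> bool" where
  "sat w (Atom a) = w a"
| "sat w Top = True"
| "sat w Bot = False"
| "sat w (Neg f) = (\<not> sat w f)"
| "sat w (Conj f g) = (sat w f \<and> sat w g)"
| "sat w (Disj f g) = (sat w f \<or> sat w g)"
| "sat w (Impl f g) = (sat w f \<longrightarrow> sat w g)"

text \<open>Data d_1..d_K are given as a list ds (a multiset with an enumeration);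
  mm assigns each datum the model it supports. p(n) = |{k. mm(d_k) = n}| / K.\<close>
definition prob :: "'d list \<Rightarrow> ('d \<Rightarrow> 'a model) \<Rightarrow> 'a model \<Rightarrow> real" where
  "prob ds mm n = real (length (filter (\<lambda>d. mm d = n) ds)) / real (length ds)"

definition lik :: "real \<Rightarrow> 'a form \<Rightarrow> 'a model \<Rightarrow> real" where
  "lik \<mu> \<alpha> w = (if sat w \<alpha> then \<mu> else 1 - \<mu>)"

definition likset :: "real \<Rightarrow> 'a form set \<Rightarrow> 'a model \<Rightarrow> real" where
  "likset \<mu> \<Delta> w = (\<Prod>\<beta>\<in>\<Delta>. lik \<mu> \<beta> w)"

text \<open>The ratio inside the limit defining p(alpha | Delta), for a fixed mu.\<close>
definition condp :: "'d list \<Rightarrow> ('d \<Rightarrow> ('a::finite) model) \<Rightarrow> real \<Rightarrow> 'a form \<Rightarrow> 'a form set \<Rightarrow> real" where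
  "condp ds mm \<mu> \<alpha> \<Delta> =
     (\<Sum>w\<in>UNIV. lik \<mu> \<alpha> w * likset \<mu> \<Delta> w * prob ds mm w) /
     (\<Sum>w\<in>UNIV. likset \<mu> \<Delta> w * prob ds mm w)"

definition models :: "'a form set \<Rightarrow> 'a model set" where
  "models S = {w. \<forall>\<beta>\<in>S. sat w \<beta>}"

definition models_p :: "'d list \<Rightarrow> ('d \<Rightarrow> 'a model) \<Rightarrow> 'a form set \<Rightarrow> 'a model set" where
  "models_p ds mm S = {w \<in> models S. prob ds mm w \<noteq> 0}"

definition emp_cons :: "'d list \<Rightarrow> ('d \<Rightarrow> 'a model) \<Rightarrow> 'a form set \<Rightarrow> 'a form \<Rightarrow> bool" where
  "emp_cons ds mm S \<alpha> \<longleftrightarrow> models_p ds mm S \<subseteq> models_p ds mm {\<alpha>}"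

definition maximal_possible :: "'d list \<Rightarrow> ('d \<Rightarrow> 'a model) \<Rightarrow> 'a form set \<Rightarrow> 'a form set \<Rightarrow> bool" where
  "maximal_possible ds mm \<Delta> S \<longleftrightarrow>
     S \<subseteq> \<Delta> \<and> models_p ds mm S \<noteq> {} \<and>
     (\<forall>\<beta>\<in>\<Delta> - S. models_p ds mm (insert \<beta> S) = {})"

definition card_max_possible :: "'d list \<Rightarrow> ('d \<Rightarrow> 'a model) \<Rightarrow> 'a form set \<Rightarrow> 'a form set \<Rightarrow> bool" where
  "card_max_possible ds mm \<Delta> S \<longleftrightarrow>
     maximal_possible ds mm \<Delta> S \<and>
     (\<forall>S'. maximal_possible ds mm \<Delta> S' \<longrightarrow> card S' \<le> card S)"

end

theory Submission
  imports Defs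
begin

lemma likset_split:
  assumes "finite \<Delta>"
  shows "likset \<mu> \<Delta> w = \<mu> ^ card {\<beta>\<in>\<Delta>. sat w \<beta>} * (1-\<mu>) ^ (card \<Delta> - card {\<beta>\<in>\<Delta>. sat w \<beta>})"
proof -
  have "likset \<mu> \<Delta> w = (\<Prod>\<beta>\<in>\<Delta> \<inter> {\<beta>. sat w \<beta>}. lik \<mu> \<beta> w) * (\<Prod>\<beta>\<in>\<Delta> - {\<beta>. sat w \<beta>}. lik \<mu> \<beta> w)"
    unfolding likset_def using assms by (rule prod.Int_Diff)
  also have "(\<Prod>\<beta>\<in>\<Delta> \<inter> {\<beta>. sat w \<beta>}. lik \<mu> \<beta> w) = (\<Prod>\<beta>\<in>\<Delta> \<inter> {\<beta>. sat w \<beta>}. \<mu>)"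
    by (rule prod.cong) (auto simp: lik_def)
  also have "\<dots> = \<mu> ^ card {\<beta>\<in>\<Delta>. sat w \<beta>}"
    by (simp add: Int_def)
  also have "(\<Prod>\<beta>\<in>\<Delta> - {\<beta>. sat w \<beta>}. lik \<mu> \<beta> w) = (\<Prod>\<beta>\<in>\<Delta> - {\<beta>. sat w \<beta>}. 1 - \<mu>)"
    by (rule prod.cong) (auto simp: lik_def)
  also have "\<dots> = (1-\<mu>) ^ card (\<Delta> - {\<beta>\<in>\<Delta>. sat w \<beta>})"
    by (simp add: set_diff_eq conj_commute cong: conj_cong)
  also have "card (\<Delta> - {\<beta>\<in>\<Delta>. sat w \<beta>}) = card \<Delta> - card {\<beta>\<in>\<Delta>. sat w \<beta>}"
    using assms by (intro card_Diff_subset) auto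
  finally show ?thesis .
qed

lemma prob_nonneg: "prob ds mm w \<ge> 0"
  by (simp add: prob_def)

theorem corollary4:
  fixes ds :: "'d list" and mm :: "'d \<Rightarrow> ('a::finite) model"
    and \<alpha> :: "'a form" and \<Delta> :: "'a form set"
  assumes "ds \<noteq> []" and "finite \<Delta>"
  shows "((\<lambda>\<mu>. condp ds mm \<mu> \<alpha> \<Delta>) \<longlongrightarrow> 1) (at_left 1) \<longleftrightarrow>
         (\<forall>S. card_max_possible ds mm \<Delta> S \<longrightarrow> emp_cons ds mm S \<alpha>)"
proof -
  define p where "p = prob ds mm"
  define P where "P = {w. p w \<noteq> 0}"
  define Sat where "Sat w = {\<beta>\<in>\<Delta>. sat w \<beta>}" for w
  define k where "k w = card (Sat w)" for w
  define n where "n = card \<Delta>"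
  define K where "K = Max (k ` P)"
  have pnn: "p w \<ge> 0" for w by (simp add: p_def prob_nonneg)
  have finP: "finite P" by simp
  have "p (mm (hd ds)) \<noteq> 0"
    using assms(1) by (cases ds) (auto simp: p_def prob_def)
  hence Pne: "P \<noteq> {}" by (auto simp: P_def)
  have kle: "k w \<le> K" if "w \<in> P" for w
    unfolding K_def using finP that by auto
  have "K \<in> k ` P" unfolding K_def using finP Pne by (intro Max_in) auto
  then obtain w0 where w0: "w0 \<in> P" "k w0 = K" by auto
  have Satsub: "Sat w \<subseteq> \<Delta>" for w by (auto simp: Sat_def)
  have kn: "k w \<le> n" for w unfolding k_def n_def
    using assms(2) Satsub by (intro card_mono) auto
  have Kn: "K \<le> n" using w0 kn by metis
  have lik_split: "likset \<mu> \<Delta> w = \<mu> ^ k w * (1-\<mu>) ^ (n - k w)" for \<mu> w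
    using likset_split[OF assms(2)] by (simp add: k_def n_def Sat_def)
  define f where "f \<mu> = (\<Sum>w\<in>UNIV. lik \<mu> \<alpha> w * (\<mu> ^ k w * (1-\<mu>) ^ (K - k w)) * p w)" for \<mu>
  define g where "g \<mu> = (\<Sum>w\<in>UNIV. (\<mu> ^ k w * (1-\<mu>) ^ (K - k w)) * p w)" for \<mu>
  have fac: "likset \<mu> \<Delta> w * p w = (1-\<mu>)^(n-K) * ((\<mu> ^ k w * (1-\<mu>) ^ (K - k w)) * p w)" for \<mu> w
  proof (cases "w \<in> P")
    case True
    have "n - k w = (n - K) + (K - k w)" using kle[OF True] Kn by simp
    then show ?thesis unfolding lik_split by (simp add: power_add)
  next
    case False then show ?thesis by (simp add: P_def)
  qed
  have num: "(\<Sum>w\<in>UNIV. lik \<mu> \<alpha> w * likset \<mu> \<Delta> w * p w) = (1-\<mu>)^(n-K) * f \<mu>" for \<mu>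
    unfolding f_def sum_distrib_left
  proof (rule sum.cong)
    fix w :: "'a model"
    show "lik \<mu> \<alpha> w * likset \<mu> \<Delta> w * p w = (1 - \<mu>) ^ (n - K) * (lik \<mu> \<alpha> w * (\<mu> ^ k w * (1 - \<mu>) ^ (K - k w)) * p w)"
      using fac[of \<mu> w] by (simp only: mult.assoc) (metis mult.left_commute)
  qed simp
  have den: "(\<Sum>w\<in>UNIV. likset \<mu> \<Delta> w * p w) = (1-\<mu>)^(n-K) * g \<mu>" for \<mu>
    unfolding g_def sum_distrib_left
    by (rule sum.cong) (auto simp: fac)
  have ev: "eventually (\<lambda>\<mu>. condp ds mm \<mu> \<alpha> \<Delta> = f \<mu> / g \<mu>) (at_left (1::real))"
  proof -
    have "eventually (\<lambda>\<mu>::real. \<mu> < 1) (at_left 1)"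
      unfolding eventually_at_filter by simp
    then show ?thesis
    proof eventually_elim
      case (elim \<mu>)
      then have "(1-\<mu>)^(n-K) \<noteq> 0" by simp
      have "condp ds mm \<mu> \<alpha> \<Delta> = ((1-\<mu>)^(n-K) * f \<mu>) / ((1-\<mu>)^(n-K) * g \<mu>)"
        unfolding condp_def p_def[symmetric] num den by (rule refl)
      also have "\<dots> = f \<mu> / g \<mu>" using \<open>(1-\<mu>)^(n-K) \<noteq> 0\<close> by (rule mult_divide_mult_cancel_left)
      finally show ?case .
    qed
  qed
  have liklim: "((\<lambda>\<mu>. lik \<mu> \<alpha> w) \<longlongrightarrow> lik 1 \<alpha> w) (at_left 1)" for w
  proof (cases "sat w \<alpha>")
    case False
    have "((\<lambda>\<mu>::real. 1 - \<mu>) \<longlongrightarrow> 1 - 1) (at_left 1)" by (intro tendsto_intros)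
    with False show ?thesis by (simp add: lik_def)
  qed (auto simp: lik_def intro!: tendsto_intros)
  have flim: "(f \<longlongrightarrow> f 1) (at_left 1)"
    unfolding f_def by (intro tendsto_intros liklim)
  have glim: "(g \<longlongrightarrow> g 1) (at_left 1)"
    unfolding g_def by (intro tendsto_intros)
  have T: "0 ^ (K - k w) * p w = (if w \<in> P \<and> k w = K then p w else 0)" for w :: "'a model"
    using kle[of w] by (auto simp: P_def)
  have g1: "g 1 = (\<Sum>w\<in>UNIV. if w \<in> P \<and> k w = K then p w else 0)"
    unfolding g_def by (simp add: T)
  have "g 1 > 0"
  proof -
    have "g 1 \<ge> (if w0 \<in> P \<and> k w0 = K then p w0 else 0)"
      unfolding g1 by (rule member_le_sum) (auto simp: pnn)
    moreover have "p w0 > 0" using w0 pnn[of w0] by (auto simp: P_def)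
    ultimately show ?thesis using w0 by simp
  qed
  have lim: "((\<lambda>\<mu>. condp ds mm \<mu> \<alpha> \<Delta>) \<longlongrightarrow> f 1 / g 1) (at_left 1)"
    using tendsto_divide[OF flim glim] \<open>g 1 > 0\<close> ev
    by (simp add: tendsto_cong)
  have f1: "f 1 = (\<Sum>w\<in>UNIV. if sat w \<alpha> then (if w \<in> P \<and> k w = K then p w else 0) else 0)"
    unfolding f_def by (rule sum.cong) (auto simp: lik_def T simp del: power_0_left)
  have gf: "g 1 - f 1 = (\<Sum>w\<in>UNIV. if \<not> sat w \<alpha> \<and> w \<in> P \<and> k w = K then p w else 0)"
    unfolding g1 f1 sum_subtractf[symmetric] by (rule sum.cong) auto
  have step1: "((\<lambda>\<mu>. condp ds mm \<mu> \<alpha> \<Delta>) \<longlongrightarrow> 1) (at_left 1) \<longleftrightarrow> f 1 / g 1 = 1"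
  proof
    assume "((\<lambda>\<mu>. condp ds mm \<mu> \<alpha> \<Delta>) \<longlongrightarrow> 1) (at_left 1)"
    from tendsto_unique[OF _ lim this] show "f 1 / g 1 = 1" by simp
  next
    assume "f 1 / g 1 = 1" with lim show "((\<lambda>\<mu>. condp ds mm \<mu> \<alpha> \<Delta>) \<longlongrightarrow> 1) (at_left 1)" by simp
  qed
  have step2: "f 1 / g 1 = 1 \<longleftrightarrow> (\<forall>w\<in>P. k w = K \<longrightarrow> sat w \<alpha>)"
  proof -
    have "f 1 / g 1 = 1 \<longleftrightarrow> g 1 - f 1 = 0" using \<open>g 1 > 0\<close> by (auto simp: field_simps)
    also have "\<dots> \<longleftrightarrow> (\<forall>w\<in>UNIV. (if \<not> sat w \<alpha> \<and> w \<in> P \<and> k w = K then p w else 0) = 0)"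
      unfolding gf by (rule sum_nonneg_eq_0_iff) (auto simp: pnn)
    also have "\<dots> \<longleftrightarrow> (\<forall>w\<in>P. k w = K \<longrightarrow> sat w \<alpha>)" by (auto simp: P_def)
    finally show ?thesis .
  qed
  have mp_P: "models_p ds mm S = {w \<in> P. \<forall>\<beta>\<in>S. sat w \<beta>}" for S
    by (auto simp: models_p_def models_def P_def p_def)
  have finSat: "finite (Sat w)" for w using Satsub assms(2) finite_subset by blast
  have mpe: "\<exists>w\<in>P. S = Sat w" if "maximal_possible ds mm \<Delta> S" for S
  proof -
    from that obtain w where w: "w \<in> P" "\<forall>\<beta>\<in>S. sat w \<beta>" and S: "S \<subseteq> \<Delta>"
      and mx: "\<forall>\<beta>\<in>\<Delta> - S. models_p ds mm (insert \<beta> S) = {}"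
      unfolding maximal_possible_def mp_P by auto
    have "S = Sat w"
    proof
      show "S \<subseteq> Sat w" using w S by (auto simp: Sat_def)
      show "Sat w \<subseteq> S"
      proof
        fix \<beta> assume "\<beta> \<in> Sat w"
        show "\<beta> \<in> S"
        proof (rule ccontr)
          assume "\<beta> \<notin> S"
          with \<open>\<beta> \<in> Sat w\<close> have "\<beta> \<in> \<Delta> - S" by (auto simp: Sat_def)
          with mx have "models_p ds mm (insert \<beta> S) = {}" by auto
          moreover have "w \<in> models_p ds mm (insert \<beta> S)"
            using w \<open>\<beta> \<in> Sat w\<close> by (auto simp: mp_P Sat_def)
          ultimately show False by auto
        qed
      qed
    qed
    with w show ?thesis by auto
  qed
  have supK: "k w' = K" if "w' \<in> P" "Sat w \<subseteq> Sat w'" "k w = K" for w w'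
    using card_mono[OF finSat that(2)] kle[OF that(1)] that(3) by (simp add: k_def)
  have mpT: "maximal_possible ds mm \<Delta> (Sat w)" if "w \<in> P" "k w = K" for w
    unfolding maximal_possible_def
  proof (intro conjI ballI)
    show "Sat w \<subseteq> \<Delta>" by (rule Satsub)
    show "models_p ds mm (Sat w) \<noteq> {}" using that by (auto simp: mp_P Sat_def)
    fix \<beta> assume b: "\<beta> \<in> \<Delta> - Sat w"
    show "models_p ds mm (insert \<beta> (Sat w)) = {}"
    proof (rule ccontr)
      assume "models_p ds mm (insert \<beta> (Sat w)) \<noteq> {}"
      then obtain w' where w': "w' \<in> P" "sat w' \<beta>" "\<forall>\<gamma>\<in>Sat w. sat w' \<gamma>" by (auto simp: mp_P)
      have sub: "insert \<beta> (Sat w) \<subseteq> Sat w'" using w' b Satsub by (auto simp: Sat_def)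
      have "card (insert \<beta> (Sat w)) \<le> k w'" unfolding k_def by (rule card_mono[OF finSat sub])
      moreover have "card (insert \<beta> (Sat w)) = k w + 1" using b finSat by (simp add: k_def)
      ultimately show False using kle[OF w'(1)] that by simp
    qed
  qed
  have cmp: "card_max_possible ds mm \<Delta> S \<longleftrightarrow> (\<exists>w\<in>P. k w = K \<and> S = Sat w)" for S
  proof
    assume c: "card_max_possible ds mm \<Delta> S"
    then obtain w where w: "w \<in> P" "S = Sat w" using mpe unfolding card_max_possible_def by blast
    have "card (Sat w0) \<le> card S" using c mpT[OF w0] unfolding card_max_possible_def by blast
    then have "k w = K" using w w0 kle[OF w(1)] by (simp add: k_def)
    with w show "\<exists>w\<in>P. k w = K \<and> S = Sat w" by blast
  next
    assume "\<exists>w\<in>P. k w = K \<and> S = Sat w"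
    then obtain w where w: "w \<in> P" "k w = K" "S = Sat w" by blast
    show "card_max_possible ds mm \<Delta> S" unfolding card_max_possible_def
    proof (intro conjI allI impI)
      show "maximal_possible ds mm \<Delta> S" using mpT[OF w(1,2)] w(3) by simp
      fix S' assume "maximal_possible ds mm \<Delta> S'"
      then obtain w' where "w' \<in> P" "S' = Sat w'" using mpe by blast
      then show "card S' \<le> card S" using kle w by (simp add: k_def)
    qed
  qed
  have step3: "(\<forall>S. card_max_possible ds mm \<Delta> S \<longrightarrow> emp_cons ds mm S \<alpha>) \<longleftrightarrow> (\<forall>w\<in>P. k w = K \<longrightarrow> sat w \<alpha>)"
  proof
    assume H: "\<forall>S. card_max_possible ds mm \<Delta> S \<longrightarrow> emp_cons ds mm S \<alpha>"
    show "\<forall>w\<in>P. k w = K \<longrightarrow> sat w \<alpha>"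
    proof (intro ballI impI)
      fix w assume w: "w \<in> P" "k w = K"
      then have "emp_cons ds mm (Sat w) \<alpha>" using H cmp by blast
      moreover have "w \<in> models_p ds mm (Sat w)" using w by (auto simp: mp_P Sat_def)
      ultimately show "sat w \<alpha>" by (auto simp: emp_cons_def mp_P)
    qed
  next
    assume H: "\<forall>w\<in>P. k w = K \<longrightarrow> sat w \<alpha>"
    show "\<forall>S. card_max_possible ds mm \<Delta> S \<longrightarrow> emp_cons ds mm S \<alpha>"
    proof (intro allI impI)
      fix S assume "card_max_possible ds mm \<Delta> S"
      then obtain w where w: "w \<in> P" "k w = K" "S = Sat w" using cmp by blast
      show "emp_cons ds mm S \<alpha>" unfolding emp_cons_def
      proof
        fix w' assume "w' \<in> models_p ds mm S"
        then have w': "w' \<in> P" "Sat w \<subseteq> Sat w'" using w by (auto simp: mp_P Sat_def)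
        then have "k w' = K" using supK w by blast
        then show "w' \<in> models_p ds mm {\<alpha>}" using H w' by (auto simp: mp_P)
      qed
    qed
  qed
  show ?thesis using step1 step2 step3 by simp
qed

end
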